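(* Let $\varepsilon>0$ and let $\mathcal Q$ be either the Laplace gradient mechanism or the projected random sign (PRS) mechanism (both defined below, with parameters $C>0$ and $1\le\hat d\le d$). Consider the algorithm PGC-A3C: there are $N$ agents, agent $n$ having a private environment parameter $\psi_n\in\Psi$ determining its local transition dynamics; the central aggregator holds global parameters $\theta\in\mathbb{R}^d$ (initialized independently of the agents) and a buffer $B$ (initially empty). Each agent $n$ (submitting exactly once; submissions are received in order $n=1,\dots,N$) copies the current global parameters $\theta'\leftarrow\theta$ (which are a function of previously received reports only), runs an episode in its own environment, computes a gradient $\mathbf g_n\in\mathbb{R}^d$ of its empirical loss at $\theta'$ (so the conditional law of $\mathbf g_n$ given everything previously received depends only on $\psi_n$ and $\theta'$), and sends $\tilde{\mathbf g}_n=\mathcal Q(\mathbf g_n)$ computed with fresh randomness. The aggregator adds $\tilde{\mathbf g}_n$ to $B$ and, whenever $|B|$ reaches a fixed maximum size, updates $\theta\leftarrow\theta-\eta\frac1{|B|}\sum_{\tilde{\mathbf g}\in B}\tilde{\mathbf g}$ ($\eta>0$) and clears $B$. Then PGC-A3C satisfies $\varepsilon$-LDP for all local agents: for each $n$, each fixed $(\psi_m)_{m\ne n}$, all $\psi,\psi'\in\Psi$ and every measurable event $E$ concerning all reports $\tilde{\mathbf g}_1,\dots,\tilde{\mathbf g}_N$ and all global parameters computed by the aggregator, $\Pr(E\mid\psi_n=\psi)\le e^{\varepsilon}\Pr(E\mid\psi_n=\psi')$; in particular each report satisfies $\Pr(\tilde{\mathbf g}_n\in G\mid\psi_n=\psi,\tilde{\mathbf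 g}_1,\dots,\tilde{\mathbf g}_{n-1})\le e^{\varepsilon}\Pr(\tilde{\mathbf g}_n\in G\mid\psi_n=\psi',\tilde{\mathbf g}_1,\dots,\tilde{\mathbf g}_{n-1})$ for all measurable $G\subseteq\mathbb{R}^d$.
   Context: Laplace gradient mechanism: $\mathcal Q(\mathbf g)=\bar{\mathbf g}+\mathbf z$ with $\bar{\mathbf g}=\mathbf g/\max\{1,\|\mathbf g\|_1/(C/2)\}$ and $\mathbf z$ having i.i.d. coordinates of density $\frac{\varepsilon}{2C}\exp(-\frac{\varepsilon}{C}|z|)$. PRS mechanism: draw $\mathbf M\in\mathbb{R}^{\hat d\times d}$ with i.i.d. entries $-\sqrt3$ (prob. $1/6$), $0$ (prob. $2/3$), $+\sqrt3$ (prob. $1/6$); set $\mathbf u=\mathbf M\mathbf g$, $\bar u_i=\min\{C,\max\{-C,u_i\}\}$, and independently $\tilde u_i=+C$ with probability $\frac{1}{e^{\varepsilon/\hat d}+1}+\frac{\bar u_i+C}{2C}\frac{e^{\varepsilon/\hat d}-1}{e^{\varepsilon/\hat d}+1}$, else $-C$; output $\mathbf M^\top\tilde{\mathbf u}$. All mechanism randomness is independent of everything else. The specific form of the empirical A3C loss used to compute $\mathbf g_n$ is irrelevant to the claim beyond the stated dependence structure. *)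

theory Defs
  imports "HOL-Probability.Probability"
begin

definition l1_clip :: "real \<Rightarrow> real^'d \<Rightarrow> real^'d" where
  "l1_clip C g = (1 / max 1 ((\<Sum>i\<in>UNIV. \<bar>g $ i\<bar>) / (C / 2))) *\<^sub>R g"

definition laplace_mech :: "real \<Rightarrow> real \<Rightarrow> real^'d \<Rightarrow> (real^'d) measure" where
  "laplace_mech C \<epsilon> g = density lborel
     (\<lambda>z. ennreal (\<Prod>i\<in>UNIV. \<epsilon> / (2 * C) * exp (- (\<epsilon> / C) * \<bar>z $ i - l1_clip C g $ i\<bar>)))"

definition prs_entry_pmf :: "real pmf" where
  "prs_entry_pmf = map_pmf (\<lambda>k::nat. if k = 0 then - sqrt 3 else if k = 5 then sqrt 3 else 0)
                     (pmf_of_set {0..<6})"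

text \<open>Random projection matrix with 'k rows (hat d = CARD('k)) and 'd columns, i.i.d. entries.\<close>
definition prs_matrix_pmf :: "(real^'d^'k) pmf" where
  "prs_matrix_pmf = map_pmf (\<lambda>f. \<chi> i j. f (i, j)) (Pi_pmf UNIV 0 (\<lambda>_. prs_entry_pmf))"

definition prs_prob :: "real \<Rightarrow> real \<Rightarrow> nat \<Rightarrow> real \<Rightarrow> real" where
  "prs_prob C \<epsilon> dh ub = 1 / (exp (\<epsilon> / real dh) + 1)
      + (ub + C) / (2 * C) * ((exp (\<epsilon> / real dh) - 1) / (exp (\<epsilon> / real dh) + 1))"

definition prs_signs_pmf :: "('k::finite) itself \<Rightarrow> real \<Rightarrow> real \<Rightarrow> real^'k \<Rightarrow> (real^'k) pmf" where
  "prs_signs_pmf _ C \<epsilon> u = map_pmf (\<lambda>f. \<chi> i. f i)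
     (Pi_pmf UNIV 0 (\<lambda>i. map_pmf (\<lambda>b. if b then C else - C)
        (bernoulli_pmf (prs_prob C \<epsilon> CARD('k) (min C (max (- C) (u $ i)))))))"

definition prs_mech :: "('k::finite) itself \<Rightarrow> real \<Rightarrow> real \<Rightarrow> real^'d \<Rightarrow> (real^'d) measure" where
  "prs_mech k C \<epsilon> g = measure_pmf
     (prs_matrix_pmf \<bind> (\<lambda>M :: real^'d^'k.
        prs_signs_pmf k C \<epsilon> (M *v g) \<bind> (\<lambda>ut. return_pmf (transpose M *v ut))))"

text \<open>State: (global parameters, buffer). Add a report; if the buffer reaches size bmax,
  take a gradient step with the buffer average and clear the buffer.\<close>
definition agg_step :: "nat \<Rightarrow> real \<Rightarrow> ((real^'d) \<times> (real^'d) list) \<Rightarrow> real^'d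
                          \<Rightarrow> ((real^'d) \<times> (real^'d) list)" where
  "agg_step bmax \<eta> s g = (let B' = snd s @ [g] in
     if length B' = bmax then (fst s - (\<eta> / real (length B')) *\<^sub>R sum_list B', [])
     else (fst s, B'))"

primrec agg_run :: "nat \<Rightarrow> real \<Rightarrow> real^'d \<Rightarrow> (nat \<Rightarrow> real^'d) \<Rightarrow> nat
                      \<Rightarrow> ((real^'d) \<times> (real^'d) list)" where
  "agg_run bmax \<eta> \<theta>0 r 0 = (\<theta>0, [])"
| "agg_run bmax \<eta> \<theta>0 r (Suc n) = agg_step bmax \<eta> (agg_run bmax \<eta> \<theta>0 r n) (r (Suc n))"

definition hist_space :: "((real^'d) \<times> (nat \<Rightarrow> real^'d)) measure" where
  "hist_space = borel \<Otimes>\<^sub>M (\<Pi>\<^sub>M i\<in>UNIV. borel)"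

text \<open>Joint law of (theta_0, reports) after n submissions; reports are stored at indices 1..n,
  all other entries are 0. Agent m draws its gradient from K m (psi m) theta' where theta' is
  the current global parameter, and reports Q applied to it with fresh randomness.\<close>
primrec pgc_hist :: "(real^'d) measure \<Rightarrow> (nat \<Rightarrow> 'psi \<Rightarrow> real^'d \<Rightarrow> (real^'d) measure)
     \<Rightarrow> (real^'d \<Rightarrow> (real^'d) measure) \<Rightarrow> nat \<Rightarrow> real \<Rightarrow> (nat \<Rightarrow> 'psi) \<Rightarrow> nat
     \<Rightarrow> ((real^'d) \<times> (nat \<Rightarrow> real^'d)) measure" where
  "pgc_hist init K Q bmax \<eta> \<psi> 0 = distr init hist_space (\<lambda>\<theta>. (\<theta>, \<lambda>_. 0))"
| "pgc_hist init K Q bmax \<eta> \<psi> (Suc n) =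
     pgc_hist init K Q bmax \<eta> \<psi> n \<bind> (\<lambda>h.
       distr (K (Suc n) (\<psi> (Suc n)) (fst (agg_run bmax \<eta> (fst h) (snd h) n)) \<bind> Q)
             hist_space (\<lambda>g. (fst h, (snd h)(Suc n := g))))"

definition pgc_space :: "((real^'d) \<times> (nat \<Rightarrow> real^'d) \<times> (nat \<Rightarrow> real^'d)) measure" where
  "pgc_space = borel \<Otimes>\<^sub>M (\<Pi>\<^sub>M i\<in>UNIV. borel) \<Otimes>\<^sub>M (\<Pi>\<^sub>M i\<in>UNIV. borel)"

text \<open>Full transcript: (initial parameters, all reports, all global parameters theta_m,
  m = 0..N, i.e. parameters held after m submissions).\<close>
definition pgc_transcript :: "(real^'d) measure \<Rightarrow> (nat \<Rightarrow> 'psi \<Rightarrow> real^'d \<Rightarrow> (real^'d) measure)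
     \<Rightarrow> (real^'d \<Rightarrow> (real^'d) measure) \<Rightarrow> nat \<Rightarrow> real \<Rightarrow> (nat \<Rightarrow> 'psi) \<Rightarrow> nat
     \<Rightarrow> ((real^'d) \<times> (nat \<Rightarrow> real^'d) \<times> (nat \<Rightarrow> real^'d)) measure" where
  "pgc_transcript init K Q bmax \<eta> \<psi> N = distr (pgc_hist init K Q bmax \<eta> \<psi> N) pgc_space
     (\<lambda>h. (fst h, snd h, \<lambda>m. if m \<le> N then fst (agg_run bmax \<eta> (fst h) (snd h) m) else 0))"

end

theory Submission
  imports Defs
begin


lemma nn_integral_dom:
  assumes "sets M1 = sets M2" "\<forall>A\<in>sets M1. emeasure M1 A \<le> c * emeasure M2 A"
    and "f \<in> borel_measurable M2"
  shows "(\<integral>\<^sup>+x. f x \<partial>M1) \<le> c * (\<integral>\<^sup>+x. f x \<partial>M2)"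
proof -
  have le: "M1 \<le> scale_measure c M2"
  proof -
    have sp: "space M1 = space (scale_measure c M2)"
      using assms(1) sets_eq_imp_space_eq space_scale_measure by metis
    have "emeasure M1 A \<le> emeasure (scale_measure c M2) A" for A
    proof (cases "A \<in> sets M1")
      case True then show ?thesis using assms(2) by simp
    next
      case False then show ?thesis by (simp add: emeasure_notin_sets)
    qed
    then have "emeasure M1 \<le> emeasure (scale_measure c M2)" by (simp add: le_fun_def)
    then show ?thesis unfolding le_measure_iff using sp assms(1) by simp
  qed
  have "(\<integral>\<^sup>+x. f x \<partial>M1) \<le> (\<integral>\<^sup>+x. f x \<partial>scale_measure c M2)"
    by (rule nn_integral_mono_measure[OF _ le]) (simp add: assms(1))
  also have "\<dots> = c * (\<integral>\<^sup>+x. f x \<partial>M2)" by (rule nn_integral_scale_measure[OF assms(3)])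
  finally show ?thesis .
qed

lemma dom_bind_left:
  assumes s1: "sets M1 = sets S" and s2: "sets M2 = sets S" and ne: "space S \<noteq> {}"
    and N: "N \<in> S \<rightarrow>\<^sub>M subprob_algebra R"
    and d: "\<forall>A\<in>sets S. emeasure M1 A \<le> c * emeasure M2 A"
  shows "\<forall>X\<in>sets R. emeasure (M1 \<bind> N) X \<le> c * emeasure (M2 \<bind> N) X"
proof
  fix X assume X: "X \<in> sets R"
  have N1: "N \<in> M1 \<rightarrow>\<^sub>M subprob_algebra R" using N s1 by (simp cong: measurable_cong_sets)
  have N2: "N \<in> M2 \<rightarrow>\<^sub>M subprob_algebra R" using N s2 by (simp cong: measurable_cong_sets)
  have sp1: "space M1 \<noteq> {}" using ne s1 sets_eq_imp_space_eq by metis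
  have sp2: "space M2 \<noteq> {}" using ne s2 sets_eq_imp_space_eq by metis
  have "emeasure (M1 \<bind> N) X = \<integral>\<^sup>+x. emeasure (N x) X \<partial>M1" by (rule emeasure_bind[OF sp1 N1 X])
  also have "\<dots> \<le> c * \<integral>\<^sup>+x. emeasure (N x) X \<partial>M2"
    by (rule nn_integral_dom) (use s1 s2 d X N2 in auto)
  also have "\<integral>\<^sup>+x. emeasure (N x) X \<partial>M2 = emeasure (M2 \<bind> N) X" by (rule emeasure_bind[OF sp2 N2 X, symmetric])
  finally show "emeasure (M1 \<bind> N) X \<le> c * emeasure (M2 \<bind> N) X" .
qed

lemma dom_bind_right:
  assumes ne: "space M \<noteq> {}"
    and N1: "N1 \<in> M \<rightarrow>\<^sub>M subprob_algebra R" and N2: "N2 \<in> M \<rightarrow>\<^sub>M subprob_algebra R"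
    and d: "\<And>x. x \<in> space M \<Longrightarrow> \<forall>A\<in>sets R. emeasure (N1 x) A \<le> c * emeasure (N2 x) A"
  shows "\<forall>X\<in>sets R. emeasure (M \<bind> N1) X \<le> c * emeasure (M \<bind> N2) X"
proof
  fix X assume X: "X \<in> sets R"
  have "emeasure (M \<bind> N1) X = \<integral>\<^sup>+x. emeasure (N1 x) X \<partial>M" by (rule emeasure_bind[OF ne N1 X])
  also have "\<dots> \<le> \<integral>\<^sup>+x. c * emeasure (N2 x) X \<partial>M"
    by (rule nn_integral_mono) (use d X in auto)
  also have "\<dots> = c * \<integral>\<^sup>+x. emeasure (N2 x) X \<partial>M"
    by (rule nn_integral_cmult) (use N2 X in measurable)
  also have "\<integral>\<^sup>+x. emeasure (N2 x) X \<partial>M = emeasure (M \<bind> N2) X" by (rule emeasure_bind[OF ne N2 X, symmetric])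
  finally show "emeasure (M \<bind> N1) X \<le> c * emeasure (M \<bind> N2) X" .
qed

lemma dom_distr:
  assumes "sets M1 = sets M2" "f \<in> M2 \<rightarrow>\<^sub>M T"
    and d: "\<forall>A\<in>sets M1. emeasure M1 A \<le> c * emeasure M2 A"
  shows "\<forall>X\<in>sets T. emeasure (distr M1 T f) X \<le> c * emeasure (distr M2 T f) X"
proof
  fix X assume X: "X \<in> sets T"
  have f1: "f \<in> M1 \<rightarrow>\<^sub>M T" using assms(1,2) by (simp cong: measurable_cong_sets)
  have sp: "space M1 = space M2" using assms(1) sets_eq_imp_space_eq by metis
  have m: "f -` X \<inter> space M1 \<in> sets M1" using f1 X by (rule measurable_sets)
  have "emeasure (distr M1 T f) X = emeasure M1 (f -` X \<inter> space M1)" by (rule emeasure_distr[OF f1 X])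
  also have "\<dots> \<le> c * emeasure M2 (f -` X \<inter> space M1)" using d m by blast
  also have "emeasure M2 (f -` X \<inter> space M1) = emeasure (distr M2 T f) X"
    unfolding sp by (rule emeasure_distr[OF assms(2) X, symmetric])
  finally show "emeasure (distr M1 T f) X \<le> c * emeasure (distr M2 T f) X" .
qed

lemma dom_kernel_prob:
  assumes Ka: "prob_space Ka" and Kb: "prob_space Kb" and sa: "sets Ka = sets S" and sb: "sets Kb = sets S"
    and Q: "Q \<in> S \<rightarrow>\<^sub>M subprob_algebra R"
    and d: "\<And>x y. x \<in> space S \<Longrightarrow> y \<in> space S \<Longrightarrow> \<forall>A\<in>sets R. emeasure (Q x) A \<le> c * emeasure (Q y) A"
  shows "\<forall>X\<in>sets R. emeasure (Ka \<bind> Q) X \<le> c * emeasure (Kb \<bind> Q) X"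
proof
  fix X assume X: "X \<in> sets R"
  have Qa: "Q \<in> Ka \<rightarrow>\<^sub>M subprob_algebra R" using Q sa by (simp cong: measurable_cong_sets)
  have Qb: "Q \<in> Kb \<rightarrow>\<^sub>M subprob_algebra R" using Q sb by (simp cong: measurable_cong_sets)
  have spa: "space Ka = space S" using sa sets_eq_imp_space_eq by metis
  have spb: "space Kb = space S" using sb sets_eq_imp_space_eq by metis
  have nea: "space Ka \<noteq> {}" using Ka prob_space.not_empty by blast
  have neb: "space Kb \<noteq> {}" using Kb prob_space.not_empty by blast
  define L where "L = emeasure (Ka \<bind> Q) X"
  have L: "L = \<integral>\<^sup>+x. emeasure (Q x) X \<partial>Ka" unfolding L_def by (rule emeasure_bind[OF nea Qa X])
  have Ly: "L \<le> c * emeasure (Q y) X" if y: "y \<in> space S" for y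
  proof -
    have "L \<le> \<integral>\<^sup>+x. c * emeasure (Q y) X \<partial>Ka"
      unfolding L by (rule nn_integral_mono) (use d y X spa in auto)
    also have "\<dots> = c * emeasure (Q y) X"
      using Ka by (simp add: prob_space.emeasure_space_1)
    finally show ?thesis .
  qed
  have "L = \<integral>\<^sup>+y. L \<partial>Kb" using Kb by (simp add: prob_space.emeasure_space_1)
  also have "\<dots> \<le> \<integral>\<^sup>+y. c * emeasure (Q y) X \<partial>Kb"
    by (rule nn_integral_mono) (use Ly spb in auto)
  also have "\<dots> = c * \<integral>\<^sup>+y. emeasure (Q y) X \<partial>Kb"
    by (rule nn_integral_cmult) (use Qb X in measurable)
  also have "\<integral>\<^sup>+y. emeasure (Q y) X \<partial>Kb = emeasure (Kb \<bind> Q) X" by (rule emeasure_bind[OF neb Qb X, symmetric])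
  finally show "emeasure (Ka \<bind> Q) X \<le> c * emeasure (Kb \<bind> Q) X" unfolding L_def .
qed



lemma hist_comp_meas[measurable]: "(\<lambda>h. snd h j) \<in> borel_measurable (hist_space :: ((real^'d) \<times> (nat \<Rightarrow> real^'d)) measure)"
  unfolding hist_space_def by measurable

lemma hist_fst_meas[measurable]: "(\<lambda>h. fst h) \<in> borel_measurable (hist_space :: ((real^'d) \<times> (nat \<Rightarrow> real^'d)) measure)"
  unfolding hist_space_def by measurable

lemma sum_list_map_meas:
  "(\<lambda>h. sum_list (map (snd h) L)) \<in> borel_measurable (hist_space :: ((real^'d) \<times> (nat \<Rightarrow> real^'d)) measure)"
proof (induction L)
  case Nil then show ?case by simp
next
  case (Cons a L)
  then show ?case by simp measurable
qed

lemma agg_struct: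
  "(\<exists>L. \<forall>\<theta>0 (r::nat \<Rightarrow> real^'d). snd (agg_run bmax \<eta> \<theta>0 r n) = map r L) \<and>
   (\<lambda>h. fst (agg_run bmax \<eta> (fst h) (snd h) n)) \<in> borel_measurable (hist_space :: ((real^'d) \<times> (nat \<Rightarrow> real^'d)) measure)"
proof (induction n)
  case 0
  then show ?case by simp
next
  case (Suc n)
  then obtain L where L: "\<And>\<theta>0 (r::nat \<Rightarrow> real^'d). snd (agg_run bmax \<eta> \<theta>0 r n) = map r L" by blast
  have m: "(\<lambda>h. fst (agg_run bmax \<eta> (fst h) (snd h) n)) \<in> borel_measurable (hist_space :: ((real^'d) \<times> (nat \<Rightarrow> real^'d)) measure)"
    using Suc by blast
  show ?case
  proof (cases "length L + 1 = bmax")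
    case True
    have e: "agg_run bmax \<eta> \<theta>0 r (Suc n) = (fst (agg_run bmax \<eta> \<theta>0 r n) - (\<eta> / real (length L + 1)) *\<^sub>R sum_list (map r (L @ [Suc n])), [])"
      for \<theta>0 and r :: "nat \<Rightarrow> real^'d"
      using True by (simp add: agg_step_def Let_def L)
    show ?thesis
    proof
      show "\<exists>L. \<forall>\<theta>0 (r::nat \<Rightarrow> real^'d). snd (agg_run bmax \<eta> \<theta>0 r (Suc n)) = map r L"
        by (rule exI[of _ "[]"]) (simp del: agg_run.simps add: e)
      show "(\<lambda>h. fst (agg_run bmax \<eta> (fst h) (snd h) (Suc n))) \<in> borel_measurable (hist_space :: ((real^'d) \<times> (nat \<Rightarrow> real^'d)) measure)"
        unfolding e fst_conv using m sum_list_map_meas[of "L @ [Suc n]"] by measurable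
    qed
  next
    case False
    have e: "agg_run bmax \<eta> \<theta>0 r (Suc n) = (fst (agg_run bmax \<eta> \<theta>0 r n), map r (L @ [Suc n]))"
      for \<theta>0 and r :: "nat \<Rightarrow> real^'d"
      using False by (simp add: agg_step_def Let_def L)
    show ?thesis
    proof
      show "\<exists>L. \<forall>\<theta>0 (r::nat \<Rightarrow> real^'d). snd (agg_run bmax \<eta> \<theta>0 r (Suc n)) = map r L"
        by (rule exI[of _ "L @ [Suc n]"]) (simp del: agg_run.simps add: e)
      show "(\<lambda>h. fst (agg_run bmax \<eta> (fst h) (snd h) (Suc n))) \<in> borel_measurable (hist_space :: ((real^'d) \<times> (nat \<Rightarrow> real^'d)) measure)"
        unfolding e fst_conv using m by simp
    qed
  qed
qed

lemma agg_meas[measurable]: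
  "(\<lambda>h. fst (agg_run bmax \<eta> (fst h) (snd h) n)) \<in> borel_measurable (hist_space :: ((real^'d) \<times> (nat \<Rightarrow> real^'d)) measure)"
  using agg_struct by blast



lemma id_meas: "sets (borel :: 'a::topological_space measure) \<subseteq> sets R \<Longrightarrow> (\<lambda>x. x) \<in> R \<rightarrow>\<^sub>M (borel :: 'a measure)"
  unfolding measurable_def by auto

lemma hist_snd_meas[measurable]: "(\<lambda>h. snd h) \<in> (hist_space :: ((real^'d) \<times> (nat \<Rightarrow> real^'d)) measure) \<rightarrow>\<^sub>M (\<Pi>\<^sub>M i\<in>UNIV. borel)"
  unfolding hist_space_def by measurable

lemma space_hist_ne: "space (hist_space :: ((real^'d) \<times> (nat \<Rightarrow> real^'d)) measure) \<noteq> {}"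
  unfolding hist_space_def by (auto simp: space_pair_measure space_PiM)

lemma upd_meas:
  assumes "sets (borel :: (real^'d) measure) \<subseteq> sets R"
  shows "(\<lambda>(h, g::real^'d). (fst h, (snd h)(k := g))) \<in> ((hist_space :: ((real^'d) \<times> (nat \<Rightarrow> real^'d)) measure) \<Otimes>\<^sub>M R) \<rightarrow>\<^sub>M hist_space"
proof -
  have g: "(\<lambda>x. x) \<in> R \<rightarrow>\<^sub>M (borel :: (real^'d) measure)" by (rule id_meas[OF assms])
  have c: "(\<lambda>p. ((snd (fst p)) (k := snd p)) i) \<in> ((hist_space :: ((real^'d) \<times> (nat \<Rightarrow> real^'d)) measure) \<Otimes>\<^sub>M R) \<rightarrow>\<^sub>M borel" for i
  proof (cases "i = k")
    case True
    then show ?thesis using measurable_compose[OF measurable_snd g] by simp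
  next
    case False
    then show ?thesis by simp measurable
  qed
  have "(\<lambda>p. (snd (fst p)) (k := snd p)) \<in> ((hist_space :: ((real^'d) \<times> (nat \<Rightarrow> real^'d)) measure) \<Otimes>\<^sub>M R) \<rightarrow>\<^sub>M (\<Pi>\<^sub>M i\<in>UNIV. borel)"
    using measurable_PiM_single'[where f="\<lambda>i p. ((snd (fst p)) (k := snd p)) i" and I=UNIV and M="\<lambda>_. borel", OF c]
    by (simp add: fun_upd_def)
  then show ?thesis unfolding hist_space_def[of] case_prod_beta
    by (simp add: hist_space_def) measurable
qed



lemma K_props:
  assumes "\<And>m p. K m p \<in> borel \<rightarrow>\<^sub>M prob_algebra borel"
  shows "prob_space (K i q t)" "sets (K i q t) = sets borel"
  using measurable_space[OF assms[of i q], of t] by (auto simp: space_prob_algebra)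

lemma KQ_meas:
  assumes K: "\<And>m p. K m p \<in> borel \<rightarrow>\<^sub>M prob_algebra borel"
    and Q: "Q \<in> borel \<rightarrow>\<^sub>M subprob_algebra R"
  shows "(\<lambda>\<theta>. K m p \<theta> \<bind> Q) \<in> borel \<rightarrow>\<^sub>M subprob_algebra R"
  by (rule measurable_bind2[OF measurable_prob_algebraD[OF K] Q])

lemma kern_meas:
  fixes K :: "nat \<Rightarrow> 'psi \<Rightarrow> real^'d \<Rightarrow> (real^'d) measure"
  assumes K: "\<And>m p. K m p \<in> borel \<rightarrow>\<^sub>M prob_algebra borel"
    and Q: "Q \<in> borel \<rightarrow>\<^sub>M subprob_algebra R"
    and R: "sets (borel :: (real^'d) measure) \<subseteq> sets R"
  shows "(\<lambda>h. distr (K (Suc n) p (fst (agg_run bmax \<eta> (fst h) (snd h) n)) \<bind> Q) hist_space (\<lambda>g. (fst h, (snd h)(Suc n := g))))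
     \<in> (hist_space :: ((real^'d) \<times> (nat \<Rightarrow> real^'d)) measure) \<rightarrow>\<^sub>M subprob_algebra hist_space"
proof -
  have g: "(\<lambda>h. K (Suc n) p (fst (agg_run bmax \<eta> (fst h) (snd h) n)) \<bind> Q) \<in> (hist_space :: ((real^'d) \<times> (nat \<Rightarrow> real^'d)) measure) \<rightarrow>\<^sub>M subprob_algebra R"
    by (rule measurable_compose[OF agg_meas KQ_meas[OF K Q]])
  show ?thesis
    by (rule measurable_distr2[OF _ g]) (use upd_meas[OF R, of "Suc n"] in \<open>simp add: case_prod_beta\<close>)
qed

lemma hist_sets:
  fixes K :: "nat \<Rightarrow> 'psi \<Rightarrow> real^'d \<Rightarrow> (real^'d) measure"
  assumes K: "\<And>m p. K m p \<in> borel \<rightarrow>\<^sub>M prob_algebra borel"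
    and Q: "Q \<in> borel \<rightarrow>\<^sub>M subprob_algebra R"
    and R: "sets (borel :: (real^'d) measure) \<subseteq> sets R"
    and I: "sets init = sets borel"
  shows "sets (pgc_hist init K Q bmax \<eta> \<psi> m) = sets hist_space"
proof (induction m)
  case 0
  then show ?case by simp
next
  case (Suc m)
  have ne: "space (pgc_hist init K Q bmax \<eta> \<psi> m) \<noteq> {}"
    using Suc space_hist_ne sets_eq_imp_space_eq by metis
  have km: "(\<lambda>h. distr (K (Suc m) (\<psi> (Suc m)) (fst (agg_run bmax \<eta> (fst h) (snd h) m)) \<bind> Q) hist_space (\<lambda>g. (fst h, (snd h)(Suc m := g))))
     \<in> pgc_hist init K Q bmax \<eta> \<psi> m \<rightarrow>\<^sub>M subprob_algebra hist_space"
    using kern_meas[OF K Q R] Suc by (simp cong: measurable_cong_sets)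
  show ?case by (simp only: pgc_hist.simps) (rule sets_bind_measurable[OF km ne])
qed



lemma transcript_meas:
  "(\<lambda>h. (fst h, snd h, \<lambda>m. if m \<le> N then fst (agg_run bmax \<eta> (fst h) (snd h) m) else 0))
    \<in> (hist_space :: ((real^'d) \<times> (nat \<Rightarrow> real^'d)) measure) \<rightarrow>\<^sub>M pgc_space"
proof -
  have c: "(\<lambda>h. if m \<le> N then fst (agg_run bmax \<eta> (fst h) (snd h) m) else 0) \<in> (hist_space :: ((real^'d) \<times> (nat \<Rightarrow> real^'d)) measure) \<rightarrow>\<^sub>M borel" for m
    by measurable
  have "(\<lambda>h m. if m \<le> N then fst (agg_run bmax \<eta> (fst h) (snd h) m) else 0) \<in> (hist_space :: ((real^'d) \<times> (nat \<Rightarrow> real^'d)) measure) \<rightarrow>\<^sub>M (\<Pi>\<^sub>M i\<in>UNIV. borel)"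
    using measurable_PiM_single'[where I=UNIV and M="\<lambda>_. borel", OF c] by simp
  then show ?thesis unfolding pgc_space_def by measurable
qed

theorem abstract_main:
  fixes c :: ennreal and N n :: nat
    and init :: "(real^'d) measure"
    and K :: "nat \<Rightarrow> 'psi \<Rightarrow> real^'d \<Rightarrow> (real^'d) measure"
    and Q :: "real^'d \<Rightarrow> (real^'d) measure"
    and \<psi> :: "nat \<Rightarrow> 'psi" and a b :: 'psi
  assumes Q: "Q \<in> borel \<rightarrow>\<^sub>M subprob_algebra R"
    and R: "sets (borel :: (real^'d) measure) \<subseteq> sets R"
    and Qd: "\<And>x y. \<forall>A\<in>sets R. emeasure (Q x) A \<le> c * emeasure (Q y) A"
    and "prob_space init" and I: "sets init = sets borel"
    and K: "\<And>m p. K m p \<in> borel \<rightarrow>\<^sub>M prob_algebra borel"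
    and "1 \<le> n" and "n \<le> N"
  shows "(\<forall>E\<in>sets pgc_space.
            emeasure (pgc_transcript init K Q bmax \<eta> (\<psi>(n := a)) N) E
              \<le> c * emeasure (pgc_transcript init K Q bmax \<eta> (\<psi>(n := b)) N) E)
       \<and> (\<forall>\<theta>'. \<forall>G\<in>sets (borel :: (real^'d) measure).
            emeasure (K n a \<theta>' \<bind> Q) G \<le> c * emeasure (K n b \<theta>' \<bind> Q) G)"
proof -
  have Kp: "prob_space (K i q t)" for i q t by (rule K_props(1)[OF K])
  have Ks: "sets (K i q t) = sets borel" for i q t by (rule K_props(2)[OF K])
  have KQd: "\<forall>X\<in>sets R. emeasure (K m p \<theta> \<bind> Q) X \<le> c * emeasure (K m p' \<theta> \<bind> Q) X" for m p p' \<theta>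
    by (rule dom_kernel_prob[where S=borel]) (use Kp Ks Q Qd in auto)
  have part2: "\<forall>\<theta>'. \<forall>G\<in>sets (borel :: (real^'d) measure).
            emeasure (K n a \<theta>' \<bind> Q) G \<le> c * emeasure (K n b \<theta>' \<bind> Q) G"
    using KQd R by blast
  define Ha where "Ha = pgc_hist init K Q bmax \<eta> (\<psi>(n := a))"
  define Hb where "Hb = pgc_hist init K Q bmax \<eta> (\<psi>(n := b))"
  define kern where "kern = (\<lambda>p m h. distr (K (Suc m) p (fst (agg_run bmax \<eta> (fst h) (snd h) m)) \<bind> Q) (hist_space :: ((real^'d) \<times> (nat \<Rightarrow> real^'d)) measure) (\<lambda>g. (fst h, (snd h)(Suc m := g))))"
  have Ha_S: "Ha (Suc m) = Ha m \<bind> kern ((\<psi>(n := a)) (Suc m)) m" for m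
    unfolding Ha_def kern_def by simp
  have Hb_S: "Hb (Suc m) = Hb m \<bind> kern ((\<psi>(n := b)) (Suc m)) m" for m
    unfolding Hb_def kern_def by simp
  have kern_m: "kern p m \<in> (hist_space :: ((real^'d) \<times> (nat \<Rightarrow> real^'d)) measure) \<rightarrow>\<^sub>M subprob_algebra hist_space" for p m
    unfolding kern_def by (rule kern_meas[OF K Q R])
  have sa: "sets (Ha m) = sets hist_space" for m unfolding Ha_def by (rule hist_sets[OF K Q R I])
  have sb: "sets (Hb m) = sets hist_space" for m unfolding Hb_def by (rule hist_sets[OF K Q R I])
  have eq: "m < n \<Longrightarrow> Ha m = Hb m" for m
  proof (induction m)
    case 0 then show ?case unfolding Ha_def Hb_def by simp
  next
    case (Suc m)
    then have "Ha m = Hb m" by simp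
    moreover have "(\<psi>(n := a)) (Suc m) = (\<psi>(n := b)) (Suc m)" using Suc.prems by simp
    ultimately show ?case unfolding Ha_S Hb_S by simp
  qed
  obtain n' where n': "n = Suc n'" using \<open>1 \<le> n\<close> by (cases n) auto
  have kern_d: "\<forall>X\<in>sets hist_space. emeasure (kern p m h) X \<le> c * emeasure (kern p' m h) X" for p p' m h
  proof -
    have ne: "space (K (Suc m) q \<theta>) \<noteq> {}" for q \<theta>
      using Kp prob_space.not_empty by blast
    have sKQ: "sets (K (Suc m) q \<theta> \<bind> Q) = sets R" for q \<theta>
      by (rule sets_bind_measurable[OF _ ne]) (use Q Ks in \<open>simp cong: measurable_cong_sets\<close>)
    have f: "(\<lambda>g. (fst h, (snd h)(Suc m := g))) \<in> R \<rightarrow>\<^sub>M (hist_space :: ((real^'d) \<times> (nat \<Rightarrow> real^'d)) measure)"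
      using measurable_Pair2[OF upd_meas[OF R, of "Suc m"], of h] space_hist_ne
      by (auto simp: hist_space_def space_pair_measure space_PiM)
    show ?thesis unfolding kern_def
      by (rule dom_distr) (use sKQ f KQd in \<open>auto cong: measurable_cong_sets\<close>)
  qed
  have dom: "n \<le> m \<Longrightarrow> \<forall>X\<in>sets hist_space. emeasure (Ha m) X \<le> c * emeasure (Hb m) X" for m
  proof (induction m)
    case 0 then show ?case using \<open>1 \<le> n\<close> by simp
  next
    case (Suc m)
    show ?case
    proof (cases "Suc m = n")
      case True
      then have m: "m = n'" using n' by simp
      have e: "Hb m = Ha m" using eq[of m] m n' by simp
      have ne: "space (Ha m) \<noteq> {}" using sa space_hist_ne sets_eq_imp_space_eq by metis
      show ?thesis unfolding Ha_S Hb_S e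
        by (rule dom_bind_right[OF ne]) (use kern_m sa kern_d in \<open>auto cong: measurable_cong_sets\<close>)
    next
      case False
      then have IH: "\<forall>X\<in>sets hist_space. emeasure (Ha m) X \<le> c * emeasure (Hb m) X" using Suc by simp
      have p: "(\<psi>(n := a)) (Suc m) = (\<psi>(n := b)) (Suc m)" using False by simp
      show ?thesis unfolding Ha_S Hb_S p
        by (rule dom_bind_left[OF sa sb space_hist_ne kern_m IH])
    qed
  qed
  have part1: "\<forall>E\<in>sets pgc_space.
            emeasure (pgc_transcript init K Q bmax \<eta> (\<psi>(n := a)) N) E
              \<le> c * emeasure (pgc_transcript init K Q bmax \<eta> (\<psi>(n := b)) N) E"
    unfolding pgc_transcript_def Ha_def[symmetric] Hb_def[symmetric]
    by (rule dom_distr) (use sa sb dom[OF \<open>n \<le> N\<close>] transcript_meas in \<open>auto cong: measurable_cong_sets\<close>)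
  show ?thesis using part1 part2 by blast
qed



lemma vec_nth_meas[measurable]: "(\<lambda>x::real^'n. x $ i) \<in> borel_measurable borel"
  by (intro borel_measurable_continuous_onI continuous_on_component continuous_on_id)

lemma l1_clip_nth: "l1_clip C g $ i = g $ i / max 1 ((\<Sum>j\<in>UNIV. \<bar>g $ j\<bar>) / (C / 2))"
  by (simp add: l1_clip_def)

lemma l1_clip_bound:
  assumes C: "C > 0"
  shows "(\<Sum>i\<in>UNIV. \<bar>l1_clip C g $ i\<bar>) \<le> C / 2"
proof -
  define S where "S = (\<Sum>j\<in>UNIV. \<bar>g $ j\<bar>)"
  define m where "m = max 1 (S / (C / 2))"
  have m: "m \<ge> 1" unfolding m_def by simp
  have ci: "l1_clip C g $ i = g $ i / m" for i by (simp add: l1_clip_nth S_def m_def)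
  have "(\<Sum>i\<in>UNIV. \<bar>l1_clip C g $ i\<bar>) = (\<Sum>i\<in>UNIV. \<bar>g $ i\<bar> / m)"
    using m by (simp add: ci abs_div)
  also have "\<dots> = S / m" unfolding S_def by (simp add: sum_divide_distrib)
  also have "\<dots> \<le> C / 2"
  proof (cases "S / (C / 2) \<le> 1")
    case True
    then have "m = 1" unfolding m_def by simp
    then show ?thesis using True C by (simp add: field_simps)
  next
    case False
    then have "m = S / (C / 2)" unfolding m_def by simp
    moreover have "S > 0" using False C by (auto simp: field_simps)
    ultimately have "S / m = C / 2" using C by simp
    then show ?thesis by simp
  qed
  finally show ?thesis .
qed

lemma lap_pointwise:
  fixes a b z :: "real^'d"
  assumes C: "C > 0" and e: "\<epsilon> > 0"
    and a: "(\<Sum>i\<in>UNIV. \<bar>a $ i\<bar>) \<le> C / 2" and b: "(\<Sum>i\<in>UNIV. \<bar>b $ i\<bar>) \<le> C / 2"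
  shows "(\<Prod>i\<in>UNIV. \<epsilon> / (2 * C) * exp (- (\<epsilon> / C) * \<bar>z $ i - a $ i\<bar>))
     \<le> exp \<epsilon> * (\<Prod>i\<in>UNIV. \<epsilon> / (2 * C) * exp (- (\<epsilon> / C) * \<bar>z $ i - b $ i\<bar>))"
proof -
  define k where "k = \<epsilon> / (2 * C)"
  have k: "k > 0" unfolding k_def using C e by simp
  have P: "(\<Prod>i\<in>UNIV. k * exp (- (\<epsilon> / C) * \<bar>z $ i - c $ i\<bar>)) = k ^ CARD('d) * exp (\<Sum>i\<in>UNIV. - (\<epsilon> / C) * \<bar>z $ i - c $ i\<bar>)" for c :: "real^'d"
    by (simp add: prod.distrib exp_sum)
  have tri: "\<bar>z $ i - b $ i\<bar> - \<bar>z $ i - a $ i\<bar> \<le> \<bar>a $ i\<bar> + \<bar>b $ i\<bar>" for i by linarith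
  have "(\<Sum>i\<in>UNIV. \<bar>z $ i - b $ i\<bar> - \<bar>z $ i - a $ i\<bar>) \<le> (\<Sum>i\<in>UNIV. \<bar>a $ i\<bar> + \<bar>b $ i\<bar>)"
    by (rule sum_mono) (rule tri)
  also have "\<dots> \<le> C" using a b by (simp add: sum.distrib)
  finally have s: "(\<Sum>i\<in>UNIV. \<bar>z $ i - b $ i\<bar>) - (\<Sum>i\<in>UNIV. \<bar>z $ i - a $ i\<bar>) \<le> C"
    by (simp add: sum_subtractf)
  have "(\<epsilon> / C) * ((\<Sum>i\<in>UNIV. \<bar>z $ i - b $ i\<bar>) - (\<Sum>i\<in>UNIV. \<bar>z $ i - a $ i\<bar>)) \<le> (\<epsilon> / C) * C"
    using s C e by (intro mult_left_mono) auto
  then have "(- (\<epsilon> / C)) * (\<Sum>i\<in>UNIV. \<bar>z $ i - a $ i\<bar>) \<le> \<epsilon> + (- (\<epsilon> / C)) * (\<Sum>i\<in>UNIV. \<bar>z $ i - b $ i\<bar>)"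
    using C by (simp add: right_diff_distrib)
  then have "(\<Sum>i\<in>UNIV. - (\<epsilon> / C) * \<bar>z $ i - a $ i\<bar>) \<le> \<epsilon> + (\<Sum>i\<in>UNIV. - (\<epsilon> / C) * \<bar>z $ i - b $ i\<bar>)"
    by (simp only: sum_distrib_left)
  then have "exp (\<Sum>i\<in>UNIV. - (\<epsilon> / C) * \<bar>z $ i - a $ i\<bar>) \<le> exp \<epsilon> * exp (\<Sum>i\<in>UNIV. - (\<epsilon> / C) * \<bar>z $ i - b $ i\<bar>)"
    by (simp add: exp_add[symmetric])
  then have "k ^ CARD('d) * exp (\<Sum>i\<in>UNIV. - (\<epsilon> / C) * \<bar>z $ i - a $ i\<bar>) \<le> k ^ CARD('d) * (exp \<epsilon> * exp (\<Sum>i\<in>UNIV. - (\<epsilon> / C) * \<bar>z $ i - b $ i\<bar>))"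
    using k by (intro mult_left_mono) auto
  then show ?thesis unfolding k_def[symmetric] P by (simp add: mult_ac)
qed



lemma exp_dens_int: "l > 0 \<Longrightarrow> (\<integral>\<^sup>+x. ennreal (exponential_density l x) \<partial>lborel) = 1"
proof -
  assume l: "l > 0"
  interpret prob_space "density lborel (exponential_density l)" by (rule prob_space_exponential_density[OF l])
  have "emeasure (density lborel (exponential_density l)) UNIV = 1"
    using emeasure_space_1 by simp
  then show ?thesis by (subst (asm) emeasure_density) auto
qed

lemma lap1d_le:
  assumes C: "C > 0" and e: "\<epsilon> > 0"
  shows "(\<integral>\<^sup>+t. ennreal (\<epsilon> / (2 * C) * exp (- (\<epsilon> / C) * \<bar>t - m\<bar>)) \<partial>lborel) \<le> 1"
proof -
  define l where "l = \<epsilon> / C"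
  have l: "l > 0" unfolding l_def using C e by simp
  have k: "\<epsilon> / (2 * C) = l / 2" unfolding l_def by simp
  define E where "E = exponential_density l"
  have Em[measurable]: "E \<in> borel_measurable borel" unfolding E_def by measurable
  have E0: "E t \<ge> 0" for t unfolding E_def using l by (simp add: exponential_density_def)
  have "(\<integral>\<^sup>+t. ennreal (\<epsilon> / (2 * C) * exp (- (\<epsilon> / C) * \<bar>t - m\<bar>)) \<partial>lborel)
      = (\<integral>\<^sup>+t. ennreal (l / 2 * exp (- l * \<bar>t - m\<bar>)) \<partial>lborel)" unfolding k l_def ..
  also have "\<dots> = ennreal \<bar>1::real\<bar> * (\<integral>\<^sup>+t. ennreal (l / 2 * exp (- l * \<bar>(m + 1 * t) - m\<bar>)) \<partial>lborel)"
    by (rule nn_integral_real_affine) auto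
  also have "\<dots> = (\<integral>\<^sup>+t. ennreal (l / 2 * exp (- l * \<bar>t\<bar>)) \<partial>lborel)" by simp
  also have "\<dots> \<le> (\<integral>\<^sup>+t. ennreal (1/2) * ennreal (E t) + ennreal (1/2) * ennreal (E (- t)) \<partial>lborel)"
  proof (rule nn_integral_mono)
    fix t :: real
    have "l / 2 * exp (- l * \<bar>t\<bar>) \<le> 1/2 * E t + 1/2 * E (- t)"
    proof (cases "t < 0")
      case True
      then have "\<bar>t\<bar> = - t" by simp
      then show ?thesis unfolding E_def exponential_density_def using True l by (simp add: mult_ac)
    next
      case False
      then have "\<bar>t\<bar> = t" by simp
      moreover have "0 \<le> E (- t)" by (rule E0)
      ultimately show ?thesis unfolding E_def exponential_density_def using False l by (simp add: mult_ac)
    qed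
    then have "ennreal (l / 2 * exp (- l * \<bar>t\<bar>)) \<le> ennreal (1/2 * E t + 1/2 * E (- t))"
      by (rule ennreal_leI)
    also have "\<dots> = ennreal (1/2 * E t) + ennreal (1/2 * E (- t))"
      by (rule ennreal_plus) (use E0[of t] E0[of "-t"] in auto)
    also have "\<dots> = ennreal (1/2) * ennreal (E t) + ennreal (1/2) * ennreal (E (- t))"
      using E0[of t] E0[of "-t"] by (subst (1 2) ennreal_mult) auto
    finally show "ennreal (l / 2 * exp (- l * \<bar>t\<bar>)) \<le> ennreal (1/2) * ennreal (E t) + ennreal (1/2) * ennreal (E (- t))" .
  qed
  also have "\<dots> = ennreal (1/2) * (\<integral>\<^sup>+t. ennreal (E t) \<partial>lborel) + ennreal (1/2) * (\<integral>\<^sup>+t. ennreal (E (- t)) \<partial>lborel)"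
    by (simp add: nn_integral_add nn_integral_cmult)
  also have "(\<integral>\<^sup>+t. ennreal (E (- t)) \<partial>lborel) = (\<integral>\<^sup>+t. ennreal (E t) \<partial>lborel)"
  proof -
    have "(\<integral>\<^sup>+t. ennreal (E t) \<partial>lborel) = ennreal \<bar>-1::real\<bar> * (\<integral>\<^sup>+t. ennreal (E (0 + (-1) * t)) \<partial>lborel)"
      by (rule nn_integral_real_affine) auto
    then show ?thesis by simp
  qed
  also have "(\<integral>\<^sup>+t. ennreal (E t) \<partial>lborel) = 1" unfolding E_def by (rule exp_dens_int[OF l])
  finally have fin: "(\<integral>\<^sup>+t. ennreal (\<epsilon> / (2 * C) * exp (- (\<epsilon> / C) * \<bar>t - m\<bar>)) \<partial>lborel) \<le> ennreal (1/2) * 1 + ennreal (1/2) * 1" .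
  have h: "ennreal (1/2) + ennreal (1/2) = 1" by (subst ennreal_plus[symmetric]) auto
  show ?thesis using fin h by simp
qed

lemma Basis_vec_range: "(Basis :: (real^'n) set) = range (\<lambda>i. axis i 1)"
  by (auto simp: Basis_vec_def)

lemma lap_int_le:
  fixes a :: "real^'d"
  assumes C: "C > 0" and e: "\<epsilon> > 0"
  shows "(\<integral>\<^sup>+z. ennreal (\<Prod>i\<in>UNIV. \<epsilon> / (2 * C) * exp (- (\<epsilon> / C) * \<bar>z $ i - a $ i\<bar>)) \<partial>lborel) \<le> 1"
proof -
  define F where "F = (\<lambda>(b::real^'d) t. ennreal (\<epsilon> / (2 * C) * exp (- (\<epsilon> / C) * \<bar>t - a \<bullet> b\<bar>)))"
  have inj: "inj (\<lambda>i::'d. axis i (1::real))" by (auto simp: inj_on_def axis_eq_axis)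
  have eq: "ennreal (\<Prod>i\<in>UNIV. \<epsilon> / (2 * C) * exp (- (\<epsilon> / C) * \<bar>z $ i - a $ i\<bar>)) = (\<Prod>b\<in>Basis. F b (z \<bullet> b))" for z :: "real^'d"
  proof -
    have "(\<Prod>b\<in>Basis. F b (z \<bullet> b)) = (\<Prod>i\<in>UNIV. F (axis i 1) (z \<bullet> axis i 1))"
      unfolding Basis_vec_range by (subst prod.reindex[OF inj]) (simp add: o_def)
    also have "\<dots> = (\<Prod>i\<in>UNIV. ennreal (\<epsilon> / (2 * C) * exp (- (\<epsilon> / C) * \<bar>z $ i - a $ i\<bar>)))"
      unfolding F_def by (simp add: inner_axis)
    also have "\<dots> = ennreal (\<Prod>i\<in>UNIV. \<epsilon> / (2 * C) * exp (- (\<epsilon> / C) * \<bar>z $ i - a $ i\<bar>))"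
      using C e by (intro prod_ennreal) auto
    finally show ?thesis by simp
  qed
  have "(\<integral>\<^sup>+z. ennreal (\<Prod>i\<in>UNIV. \<epsilon> / (2 * C) * exp (- (\<epsilon> / C) * \<bar>z $ i - a $ i\<bar>)) \<partial>lborel)
      = (\<integral>\<^sup>+z. (\<Prod>b\<in>Basis. F b (z \<bullet> b)) \<partial>lborel)" by (simp only: eq)
  also have "\<dots> = (\<Prod>b\<in>Basis. (\<integral>\<^sup>+t. F b t \<partial>lborel))"
    by (rule nn_integral_lborel_prod) (auto simp: F_def)
  also have "\<dots> \<le> (\<Prod>b\<in>(Basis::(real^'d) set). 1)"
    by (rule prod_mono_ennreal) (unfold F_def, rule lap1d_le[OF C e])
  finally show ?thesis by simp
qed



definition lap_dens :: "real \<Rightarrow> real \<Rightarrow> real^'d \<Rightarrow> real^'d \<Rightarrow> real" where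
  "lap_dens C \<epsilon> g z = (\<Prod>i\<in>UNIV. \<epsilon> / (2 * C) * exp (- (\<epsilon> / C) * \<bar>z $ i - l1_clip C g $ i\<bar>))"

lemma laplace_mech_alt: "laplace_mech C \<epsilon> g = density lborel (\<lambda>z. ennreal (lap_dens C \<epsilon> g z))"
  unfolding laplace_mech_def lap_dens_def ..

lemma lap_dens_meas[measurable]: "(\<lambda>(g, z). lap_dens C \<epsilon> g z) \<in> borel_measurable (borel \<Otimes>\<^sub>M borel)"
  unfolding lap_dens_def l1_clip_nth case_prod_beta by measurable

lemma lap_dens_meas2[measurable]: "lap_dens C \<epsilon> g \<in> borel_measurable borel"
  unfolding lap_dens_def l1_clip_nth by measurable

lemma lap_sets: "sets (laplace_mech C \<epsilon> g) = sets borel"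
  by (simp add: laplace_mech_alt)

lemma lap_subprob:
  assumes C: "C > 0" and e: "\<epsilon> > 0"
  shows "subprob_space (laplace_mech C \<epsilon> g)"
proof (rule subprob_spaceI)
  have "emeasure (laplace_mech C \<epsilon> g) (space (laplace_mech C \<epsilon> g)) = (\<integral>\<^sup>+z. ennreal (lap_dens C \<epsilon> g z) \<partial>lborel)"
    unfolding laplace_mech_alt by (subst emeasure_density) auto
  also have "\<dots> \<le> 1" unfolding lap_dens_def by (rule lap_int_le[OF C e])
  finally show "emeasure (laplace_mech C \<epsilon> g) (space (laplace_mech C \<epsilon> g)) \<le> 1" .
  show "space (laplace_mech C \<epsilon> g) \<noteq> {}" by (simp add: laplace_mech_alt)
qed

lemma lap_meas:
  assumes C: "C > 0" and e: "\<epsilon> > 0"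
  shows "laplace_mech C \<epsilon> \<in> borel \<rightarrow>\<^sub>M subprob_algebra (borel :: (real^'d) measure)"
proof (rule measurable_subprob_algebra)
  fix g :: "real^'d" show "subprob_space (laplace_mech C \<epsilon> g)" by (rule lap_subprob[OF C e])
  show "sets (laplace_mech C \<epsilon> g) = sets borel" by (rule lap_sets)
next
  fix A :: "(real^'d) set" assume A: "A \<in> sets borel"
  have eq: "emeasure (laplace_mech C \<epsilon> g) A = (\<integral>\<^sup>+z. ennreal (lap_dens C \<epsilon> g z) * indicator A z \<partial>lborel)" for g
    unfolding laplace_mech_alt using A by (subst emeasure_density) auto
  have m: "(\<lambda>(g, z). ennreal (lap_dens C \<epsilon> g z) * indicator A z) \<in> borel_measurable (borel \<Otimes>\<^sub>M lborel)"
    using A by measurable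
  show "(\<lambda>g. emeasure (laplace_mech C \<epsilon> g) A) \<in> borel_measurable borel"
    unfolding eq using lborel.borel_measurable_nn_integral[OF m] by simp
qed

lemma lap_dom:
  fixes x y :: "real^'d"
  assumes C: "C > 0" and e: "\<epsilon> > 0"
  shows "\<forall>A\<in>sets borel. emeasure (laplace_mech C \<epsilon> x) A \<le> ennreal (exp \<epsilon>) * emeasure (laplace_mech C \<epsilon> y) A"
proof
  fix A :: "(real^'d) set" assume A: "A \<in> sets borel"
  have eq: "emeasure (laplace_mech C \<epsilon> g) A = (\<integral>\<^sup>+z. ennreal (lap_dens C \<epsilon> g z) * indicator A z \<partial>lborel)" for g
    unfolding laplace_mech_alt using A by (subst emeasure_density) auto
  have pw: "ennreal (lap_dens C \<epsilon> x z) * indicator A z \<le> ennreal (exp \<epsilon>) * (ennreal (lap_dens C \<epsilon> y z) * indicator A z)" for z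
  proof -
    have "lap_dens C \<epsilon> x z \<le> exp \<epsilon> * lap_dens C \<epsilon> y z"
      unfolding lap_dens_def by (rule lap_pointwise[OF C e l1_clip_bound[OF C] l1_clip_bound[OF C]])
    then have "ennreal (lap_dens C \<epsilon> x z) \<le> ennreal (exp \<epsilon>) * ennreal (lap_dens C \<epsilon> y z)"
      by (subst ennreal_mult[symmetric]) (use C e in \<open>auto simp: lap_dens_def intro!: ennreal_leI prod_nonneg\<close>)
    then show ?thesis by (simp add: mult.assoc[symmetric] mult_right_mono)
  qed
  have "emeasure (laplace_mech C \<epsilon> x) A \<le> (\<integral>\<^sup>+z. ennreal (exp \<epsilon>) * (ennreal (lap_dens C \<epsilon> y z) * indicator A z) \<partial>lborel)"
    unfolding eq by (rule nn_integral_mono) (rule pw)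
  also have "\<dots> = ennreal (exp \<epsilon>) * emeasure (laplace_mech C \<epsilon> y) A"
    unfolding eq using A by (subst nn_integral_cmult) auto
  finally show "emeasure (laplace_mech C \<epsilon> x) A \<le> ennreal (exp \<epsilon>) * emeasure (laplace_mech C \<epsilon> y) A" .
qed



definition sgn_pmf :: "real \<Rightarrow> real \<Rightarrow> real pmf" where
  "sgn_pmf C q = map_pmf (\<lambda>b. if b then C else - C) (bernoulli_pmf q)"

lemma prs_prob_bounds:
  assumes C: "C > 0" and e: "\<epsilon> > 0" and d: "dh > 0" and u1: "- C \<le> ub" and u2: "ub \<le> C"
  shows "1 / (exp (\<epsilon> / real dh) + 1) \<le> prs_prob C \<epsilon> dh ub"
    and "prs_prob C \<epsilon> dh ub \<le> exp (\<epsilon> / real dh) / (exp (\<epsilon> / real dh) + 1)"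
proof -
  define x where "x = exp (\<epsilon> / real dh)"
  have x: "x \<ge> 1" unfolding x_def using e d by simp
  define t where "t = (ub + C) / (2 * C)"
  have t0: "t \<ge> 0" unfolding t_def using C u1 by simp
  have t1: "t \<le> 1" unfolding t_def using C u2 by simp
  have p: "prs_prob C \<epsilon> dh ub = 1 / (x + 1) + t * ((x - 1) / (x + 1))"
    unfolding prs_prob_def x_def t_def ..
  have nn: "(x - 1) / (x + 1) \<ge> 0" using x by simp
  show "1 / (exp (\<epsilon> / real dh) + 1) \<le> prs_prob C \<epsilon> dh ub"
  proof -
    have h: "0 \<le> t * ((x - 1) / (x + 1))" using t0 nn by (rule mult_nonneg_nonneg)
    show ?thesis unfolding x_def[symmetric] p using h by linarith
  qed
  have "t * ((x - 1) / (x + 1)) \<le> 1 * ((x - 1) / (x + 1))"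
    using t1 nn by (intro mult_right_mono) auto
  then have "prs_prob C \<epsilon> dh ub \<le> 1 / (x + 1) + (x - 1) / (x + 1)" unfolding p by simp
  also have "\<dots> = x / (x + 1)" using x by (simp add: field_simps)
  finally show "prs_prob C \<epsilon> dh ub \<le> exp (\<epsilon> / real dh) / (exp (\<epsilon> / real dh) + 1)"
    unfolding x_def .
qed

lemma pmf_sgn:
  assumes C: "C > 0" and q: "0 \<le> q" "q \<le> 1"
  shows "pmf (sgn_pmf C q) v = (if v = C then q else if v = - C then 1 - q else 0)"
proof -
  have inj: "inj (\<lambda>b. if b then C else - C)" using C by (auto simp: inj_on_def split: if_splits)
  show ?thesis
  proof (cases "v = C")
    case True
    then show ?thesis unfolding sgn_pmf_def using pmf_map_inj'[OF inj, of _ True] q by simp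
  next
    case False
    show ?thesis
    proof (cases "v = - C")
      case True
      then show ?thesis unfolding sgn_pmf_def using pmf_map_inj'[OF inj, of _ False] q C by simp
    next
      case False2: False
      then show ?thesis using False unfolding sgn_pmf_def by (subst pmf_map_outside) auto
    qed
  qed
qed

lemma sgn_ratio:
  assumes C: "C > 0" and x: "x \<ge> 1"
    and q1: "1 / (x + 1) \<le> q1" "q1 \<le> x / (x + 1)"
    and q2: "1 / (x + 1) \<le> q2" "q2 \<le> x / (x + 1)"
  shows "pmf (sgn_pmf C q1) v \<le> x * pmf (sgn_pmf C q2) v"
proof -
  have xp: "x + 1 > 0" using x by simp
  have l0: "0 < 1 / (x + 1)" using xp by simp
  have u1: "x / (x + 1) \<le> 1" using xp by simp
  have b1: "0 \<le> q1" "q1 \<le> 1" using q1 l0 u1 by linarith+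
  have b2: "0 \<le> q2" "q2 \<le> 1" using q2 l0 u1 by linarith+
  have r1: "q1 \<le> x * q2"
  proof -
    have "q1 \<le> x / (x + 1)" by (rule q1(2))
    also have "\<dots> = x * (1 / (x + 1))" by simp
    also have "\<dots> \<le> x * q2" using q2(1) x by (intro mult_left_mono) auto
    finally show ?thesis .
  qed
  have r2: "1 - q1 \<le> x * (1 - q2)"
  proof -
    have "1 - q1 \<le> 1 - 1 / (x + 1)" using q1(1) by simp
    also have "\<dots> = x * (1 - x / (x + 1))" using xp by (simp add: field_simps)
    also have "\<dots> \<le> x * (1 - q2)" using q2(2) x by (intro mult_left_mono) auto
    finally show ?thesis .
  qed
  show ?thesis using r1 r2 C by (simp add: pmf_sgn[OF C b1] pmf_sgn[OF C b2])
qed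

lemma pmf_dom_emeasure:
  assumes "\<And>v. pmf p v \<le> c * pmf q v" and c: "c \<ge> 0"
  shows "emeasure (measure_pmf p) A \<le> ennreal c * emeasure (measure_pmf q) A"
proof -
  have e: "emeasure (measure_pmf r) A = (\<integral>\<^sup>+v. ennreal (pmf r v) * indicator A v \<partial>count_space UNIV)" for r
    by (subst nn_integral_measure_pmf[symmetric]) simp
  have "(\<integral>\<^sup>+v. ennreal (pmf p v) * indicator A v \<partial>count_space UNIV) \<le> (\<integral>\<^sup>+v. ennreal c * (ennreal (pmf q v) * indicator A v) \<partial>count_space UNIV)"
  proof (rule nn_integral_mono)
    fix v
    have "ennreal (pmf p v) \<le> ennreal c * ennreal (pmf q v)"
      using assms(1)[of v] c by (subst ennreal_mult[symmetric]) (auto intro: ennreal_leI)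
    then show "ennreal (pmf p v) * indicator A v \<le> ennreal c * (ennreal (pmf q v) * indicator A v)"
      by (simp add: mult.assoc[symmetric] mult_right_mono)
  qed
  also have "\<dots> = ennreal c * (\<integral>\<^sup>+v. ennreal (pmf q v) * indicator A v \<partial>count_space UNIV)"
    by (rule nn_integral_cmult) simp
  finally show ?thesis unfolding e .
qed

lemma signs_alt: "prs_signs_pmf TYPE('k::finite) C \<epsilon> u = map_pmf (\<lambda>f. \<chi> i. f i)
     (Pi_pmf UNIV 0 (\<lambda>i::'k. sgn_pmf C (prs_prob C \<epsilon> CARD('k) (min C (max (- C) (u $ i))))))"
  unfolding prs_signs_pmf_def sgn_pmf_def ..

lemma signs_dom:
  fixes u1 u2 :: "real^'k::finite"
  assumes C: "C > 0" and e: "\<epsilon> > 0"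
  shows "emeasure (measure_pmf (prs_signs_pmf TYPE('k) C \<epsilon> u1)) B \<le> ennreal (exp \<epsilon>) * emeasure (measure_pmf (prs_signs_pmf TYPE('k) C \<epsilon> u2)) B"
proof -
  define x where "x = exp (\<epsilon> / real CARD('k))"
  have x: "x \<ge> 1" unfolding x_def using e by simp
  define q where "q = (\<lambda>(u::real^'k) i. prs_prob C \<epsilon> CARD('k) (min C (max (- C) (u $ i))))"
  have qb: "1 / (x + 1) \<le> q u i \<and> q u i \<le> x / (x + 1)" for u i
    unfolding q_def x_def using prs_prob_bounds[OF C e, of "CARD('k)" "min C (max (- C) (u $ i))"] C by auto
  have pw: "pmf (Pi_pmf UNIV 0 (\<lambda>i. sgn_pmf C (q u1 i))) f \<le> exp \<epsilon> * pmf (Pi_pmf UNIV 0 (\<lambda>i. sgn_pmf C (q u2 i))) f" for f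
  proof -
    have "pmf (Pi_pmf UNIV 0 (\<lambda>i. sgn_pmf C (q u1 i))) f = (\<Prod>i\<in>UNIV. pmf (sgn_pmf C (q u1 i)) (f i))"
      by (subst pmf_Pi) auto
    also have "\<dots> \<le> (\<Prod>i\<in>(UNIV::'k set). x * pmf (sgn_pmf C (q u2 i)) (f i))"
      by (rule prod_mono) (use sgn_ratio[OF C x] qb in auto)
    also have "\<dots> = x ^ CARD('k) * (\<Prod>i\<in>UNIV. pmf (sgn_pmf C (q u2 i)) (f i))"
      by (simp add: prod.distrib)
    also have "x ^ CARD('k) = exp \<epsilon>"
      unfolding x_def by (simp add: exp_of_nat_mult[symmetric])
    also have "(\<Prod>i\<in>UNIV. pmf (sgn_pmf C (q u2 i)) (f i)) = pmf (Pi_pmf UNIV 0 (\<lambda>i. sgn_pmf C (q u2 i))) f"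
      by (subst pmf_Pi) auto
    finally show ?thesis .
  qed
  have "emeasure (measure_pmf (Pi_pmf UNIV 0 (\<lambda>i. sgn_pmf C (q u1 i)))) ((\<lambda>f. \<chi> i. f i) -` B)
     \<le> ennreal (exp \<epsilon>) * emeasure (measure_pmf (Pi_pmf UNIV 0 (\<lambda>i. sgn_pmf C (q u2 i)))) ((\<lambda>f. \<chi> i. f i) -` B)"
    by (rule pmf_dom_emeasure[OF pw]) simp
  then show ?thesis unfolding signs_alt emeasure_map_pmf q_def .
qed

lemma prs_dom:
  fixes x y :: "real^'d"
  assumes C: "C > 0" and e: "\<epsilon> > 0"
  shows "emeasure (prs_mech TYPE('k::finite) C \<epsilon> x) A \<le> ennreal (exp \<epsilon>) * emeasure (prs_mech TYPE('k) C \<epsilon> y) A"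
proof -
  have inner: "(\<integral>\<^sup>+ut. indicator A (transpose M *v ut) \<partial>measure_pmf (prs_signs_pmf TYPE('k) C \<epsilon> (M *v x)))
     \<le> ennreal (exp \<epsilon>) * (\<integral>\<^sup>+ut. indicator A (transpose M *v ut) \<partial>measure_pmf (prs_signs_pmf TYPE('k) C \<epsilon> (M *v y)))"
    for M :: "real^'d^'k"
    by (rule nn_integral_dom) (use signs_dom[OF C e] in auto)
  have "emeasure (prs_mech TYPE('k) C \<epsilon> x) A
      = (\<integral>\<^sup>+M. (\<integral>\<^sup>+ut. indicator A (transpose M *v ut) \<partial>measure_pmf (prs_signs_pmf TYPE('k) C \<epsilon> (M *v x))) \<partial>measure_pmf (prs_matrix_pmf :: (real^'d^'k) pmf))"
    unfolding prs_mech_def by simp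
  also have "\<dots> \<le> (\<integral>\<^sup>+M. ennreal (exp \<epsilon>) * (\<integral>\<^sup>+ut. indicator A (transpose M *v ut) \<partial>measure_pmf (prs_signs_pmf TYPE('k) C \<epsilon> (M *v y))) \<partial>measure_pmf (prs_matrix_pmf :: (real^'d^'k) pmf))"
    by (rule nn_integral_mono) (rule inner)
  also have "\<dots> = ennreal (exp \<epsilon>) * (\<integral>\<^sup>+M. (\<integral>\<^sup>+ut. indicator A (transpose M *v ut) \<partial>measure_pmf (prs_signs_pmf TYPE('k) C \<epsilon> (M *v y))) \<partial>measure_pmf (prs_matrix_pmf :: (real^'d^'k) pmf))"
    by (rule nn_integral_cmult) simp
  also have "(\<integral>\<^sup>+M. (\<integral>\<^sup>+ut. indicator A (transpose M *v ut) \<partial>measure_pmf (prs_signs_pmf TYPE('k) C \<epsilon> (M *v y))) \<partial>measure_pmf (prs_matrix_pmf :: (real^'d^'k) pmf))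
      = emeasure (prs_mech TYPE('k) C \<epsilon> y) A"
    unfolding prs_mech_def by simp
  finally show ?thesis .
qed



lemma set_sgn_pmf: "set_pmf (sgn_pmf C q) \<subseteq> {C, - C}"
  unfolding sgn_pmf_def by auto

lemma signs_int_meas:
  fixes h :: "real^'k::finite \<Rightarrow> ennreal"
  assumes C: "C > 0" and e: "\<epsilon> > 0"
  shows "(\<lambda>w. \<integral>\<^sup>+u. h u \<partial>measure_pmf (prs_signs_pmf TYPE('k) C \<epsilon> w)) \<in> borel_measurable borel"
proof -
  define q where "q = (\<lambda>(w::real^'k) i. prs_prob C \<epsilon> CARD('k) (min C (max (- C) (w $ i))))"
  have qb: "0 \<le> q w i \<and> q w i \<le> 1" for w i
  proof -
    define x where "x = exp (\<epsilon> / real CARD('k))"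
    have x: "x \<ge> 1" unfolding x_def using e by simp
    have xp: "x + 1 > 0" using x by simp
    have l0: "0 < 1 / (x + 1)" using xp by simp
    have u1: "x / (x + 1) \<le> 1" using xp by simp
    have "1 / (x + 1) \<le> q w i \<and> q w i \<le> x / (x + 1)"
      unfolding q_def x_def using prs_prob_bounds[OF C e, of "CARD('k)" "min C (max (- C) (w $ i))"] C by auto
    then show ?thesis using l0 u1 by linarith
  qed
  define S where "S = PiE (UNIV::'k set) (\<lambda>_. {C, - C})"
  have finS: "finite S" unfolding S_def by (rule finite_PiE) auto
  have supp: "set_pmf (Pi_pmf UNIV 0 (\<lambda>i. sgn_pmf C (q w i))) \<subseteq> S" for w
  proof
    fix f assume "f \<in> set_pmf (Pi_pmf UNIV 0 (\<lambda>i. sgn_pmf C (q w i)))"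
    then have "f \<in> PiE_dflt UNIV 0 (set_pmf \<circ> (\<lambda>i. sgn_pmf C (q w i)))"
      using set_Pi_pmf_subset'[of UNIV 0 "\<lambda>i. sgn_pmf C (q w i)"] by auto
    then have "f i \<in> {C, - C}" for i using set_sgn_pmf by (auto simp: PiE_dflt_def)
    then show "f \<in> S" unfolding S_def by (auto simp: PiE_def extensional_def)
  qed
  have eq: "(\<integral>\<^sup>+u. h u \<partial>measure_pmf (prs_signs_pmf TYPE('k) C \<epsilon> w))
     = (\<Sum>f\<in>S. h (\<chi> i. f i) * ennreal (\<Prod>i\<in>UNIV. (if f i = C then q w i else if f i = - C then 1 - q w i else 0)))" for w
  proof -
    have "(\<integral>\<^sup>+u. h u \<partial>measure_pmf (prs_signs_pmf TYPE('k) C \<epsilon> w))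
        = (\<integral>\<^sup>+f. h (\<chi> i. f i) \<partial>measure_pmf (Pi_pmf UNIV 0 (\<lambda>i. sgn_pmf C (q w i))))"
      unfolding signs_alt q_def by simp
    also have "\<dots> = (\<Sum>f\<in>S. h (\<chi> i. f i) * ennreal (pmf (Pi_pmf UNIV 0 (\<lambda>i. sgn_pmf C (q w i))) f))"
      by (rule nn_integral_measure_pmf_support[OF finS]) (use supp in auto)
    also have "\<dots> = (\<Sum>f\<in>S. h (\<chi> i. f i) * ennreal (\<Prod>i\<in>UNIV. (if f i = C then q w i else if f i = - C then 1 - q w i else 0)))"
    proof (rule sum.cong[OF refl])
      fix f
      have "pmf (Pi_pmf UNIV 0 (\<lambda>i. sgn_pmf C (q w i))) f = (\<Prod>i\<in>UNIV. pmf (sgn_pmf C (q w i)) (f i))"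
        by (subst pmf_Pi) auto
      also have "\<dots> = (\<Prod>i\<in>UNIV. (if f i = C then q w i else if f i = - C then 1 - q w i else 0))"
        by (rule prod.cong[OF refl]) (use pmf_sgn[OF C] qb in auto)
      finally show "h (\<chi> i. f i) * ennreal (pmf (Pi_pmf UNIV 0 (\<lambda>i. sgn_pmf C (q w i))) f)
          = h (\<chi> i. f i) * ennreal (\<Prod>i\<in>UNIV. (if f i = C then q w i else if f i = - C then 1 - q w i else 0))"
        by simp
    qed
    finally show ?thesis .
  qed
  have qm: "(\<lambda>w. q w i) \<in> borel_measurable borel" for i
    unfolding q_def prs_prob_def by measurable
  show ?thesis unfolding eq using qm by measurable
qed

lemma finite_matrix_supp: "finite (set_pmf (prs_matrix_pmf :: (real^'d^'k) pmf))"
proof -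
  have fe: "finite (set_pmf prs_entry_pmf)" unfolding prs_entry_pmf_def by simp
  have "set_pmf (Pi_pmf (UNIV :: ('k \<times> 'd) set) 0 (\<lambda>_. prs_entry_pmf)) \<subseteq> PiE UNIV (\<lambda>_. set_pmf prs_entry_pmf)"
    using set_Pi_pmf_subset'[of "UNIV :: ('k \<times> 'd) set" 0 "\<lambda>_. prs_entry_pmf"]
    by (auto simp: PiE_dflt_def PiE_def extensional_def)
  moreover have "finite (PiE (UNIV :: ('k \<times> 'd) set) (\<lambda>_. set_pmf prs_entry_pmf))"
    by (rule finite_PiE) (use fe in auto)
  ultimately have "finite (set_pmf (Pi_pmf (UNIV :: ('k \<times> 'd) set) 0 (\<lambda>_. prs_entry_pmf)))"
    by (rule finite_subset)
  then show ?thesis unfolding prs_matrix_pmf_def by simp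
qed

lemma prs_meas:
  assumes C: "C > 0" and e: "\<epsilon> > 0"
  shows "prs_mech TYPE('k::finite) C \<epsilon> \<in> (borel :: (real^'d) measure) \<rightarrow>\<^sub>M subprob_algebra (count_space UNIV)"
proof (rule measurable_subprob_algebra)
  fix g :: "real^'d"
  show "subprob_space (prs_mech TYPE('k) C \<epsilon> g)" unfolding prs_mech_def
    by (rule prob_space_imp_subprob_space) (rule prob_space_measure_pmf)
  show "sets (prs_mech TYPE('k) C \<epsilon> g) = sets (count_space UNIV)" unfolding prs_mech_def by simp
next
  fix X :: "(real^'d) set"
  define H where "H = (\<lambda>(M::real^'d^'k) g. \<integral>\<^sup>+ut. indicator X (transpose M *v ut) \<partial>measure_pmf (prs_signs_pmf TYPE('k) C \<epsilon> (M *v g)))"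
  have Hm: "H M \<in> borel_measurable borel" for M
  proof -
    have lin: "(\<lambda>g::real^'d. M *v g) \<in> borel_measurable borel"
      by (intro borel_measurable_continuous_onI linear_continuous_on matrix_vector_mul_bounded_linear)
    show ?thesis unfolding H_def
      by (rule measurable_compose[OF lin signs_int_meas[OF C e]])
  qed
  have eq: "emeasure (prs_mech TYPE('k) C \<epsilon> g) X = (\<Sum>M\<in>set_pmf (prs_matrix_pmf :: (real^'d^'k) pmf). H M g * ennreal (pmf prs_matrix_pmf M))" for g
  proof -
    have "emeasure (prs_mech TYPE('k) C \<epsilon> g) X = (\<integral>\<^sup>+M. H M g \<partial>measure_pmf (prs_matrix_pmf :: (real^'d^'k) pmf))"
      unfolding prs_mech_def H_def by simp
    also have "\<dots> = (\<Sum>M\<in>set_pmf (prs_matrix_pmf :: (real^'d^'k) pmf). H M g * ennreal (pmf prs_matrix_pmf M))"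
      by (rule nn_integral_measure_pmf_finite[OF finite_matrix_supp]) simp
    finally show ?thesis .
  qed
  show "(\<lambda>g. emeasure (prs_mech TYPE('k) C \<epsilon> g) X) \<in> borel_measurable borel"
    unfolding eq using Hm by measurable
qed



theorem theorem3:
  fixes \<epsilon> C \<eta> :: real and bmax N n :: nat
    and init :: "(real^'d) measure"
    and K :: "nat \<Rightarrow> 'psi \<Rightarrow> real^'d \<Rightarrow> (real^'d) measure"
    and Q :: "real^'d \<Rightarrow> (real^'d) measure"
    and \<psi> :: "nat \<Rightarrow> 'psi" and a b :: 'psi
  assumes "\<epsilon> > 0" and "C > 0" and "\<eta> > 0" and "bmax \<ge> 1"
    and "CARD('k) \<le> CARD('d)"
    and "Q = laplace_mech C \<epsilon> \<or> Q = prs_mech TYPE('k::finite) C \<epsilon>"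
    and "prob_space init" and "sets init = sets borel"
    and "\<And>m p. K m p \<in> borel \<rightarrow>\<^sub>M prob_algebra borel"
    and "1 \<le> n" and "n \<le> N"
  shows "(\<forall>E\<in>sets pgc_space.
            emeasure (pgc_transcript init K Q bmax \<eta> (\<psi>(n := a)) N) E
              \<le> ennreal (exp \<epsilon>) * emeasure (pgc_transcript init K Q bmax \<eta> (\<psi>(n := b)) N) E)
       \<and> (\<forall>\<theta>'. \<forall>G\<in>sets (borel :: (real^'d) measure).
            emeasure (K n a \<theta>' \<bind> Q) G \<le> ennreal (exp \<epsilon>) * emeasure (K n b \<theta>' \<bind> Q) G)"
proof -
  note Kprob = assms(9)
  show ?thesis
  proof (cases "Q = laplace_mech C \<epsilon>")
    case True
    show ?thesis
      unfolding True
      by (rule abstract_main[where R=borel])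
        (use lap_meas[OF assms(2) assms(1)] lap_dom[OF assms(2) assms(1)] assms(7,8,10,11) Kprob in auto)
  next
    case False
    then have Qp: "Q = prs_mech TYPE('k) C \<epsilon>" using assms(6) by blast
    show ?thesis
      unfolding Qp
      by (rule abstract_main[where R="count_space UNIV"])
        (use prs_meas[OF assms(2) assms(1)] prs_dom[OF assms(2) assms(1)] assms(7,8,10,11) Kprob in auto)
  qed
qed


end
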